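(* Let $\mathcal X\subseteq\mathbb R^{d'}$, $d'\in\mathbb N$, and let $\mu$ be a probability measure on $\mathcal X$. Let $\sigma_h:\mathbb R\to\mathbb R$ be bounded, differentiable with $\sigma_h(0)=0$, $\sigma_h'(0)\neq0$ and $\sigma_h'$ bounded and Lipschitz. Let $\Phi=\{\phi_\theta:\theta\in\Theta\}\subseteq L^2(\mu)\cap L^\infty(\mu)$ be star-shaped at $0$ (i.e. $\lambda\phi\in\Phi$ for all $\phi\in\Phi$, $\lambda\in[0,1]$) and such that $\mathrm{span}\{\phi_\theta:\theta\in\Theta\}$ is dense in $L^2(\mu)$. Then $\mathrm{span}\{\sigma_h\circ\phi_\theta:\theta\in\Theta\}$ is dense in $L^2(\mu)$. *)

theory Defs
  imports "HOL-Probability.Probability"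
begin

definition L2 :: "'a measure \<Rightarrow> ('a \<Rightarrow> real) set" where
  "L2 M = {f. f \<in> borel_measurable M \<and> integrable M (\<lambda>x. (f x)^2)}"

definition Linf :: "'a measure \<Rightarrow> ('a \<Rightarrow> real) set" where
  "Linf M = {f. f \<in> borel_measurable M \<and> (\<exists>C. AE x in M. \<bar>f x\<bar> \<le> C)}"

definition lin_span :: "('a \<Rightarrow> real) set \<Rightarrow> ('a \<Rightarrow> real) set" where
  "lin_span S = {h. \<exists>n::nat. \<exists>c g. (\<forall>i<n. g i \<in> S) \<and> h = (\<lambda>x. \<Sum>i<n. c i * g i x)}"

definition dense_L2 :: "'a measure \<Rightarrow> ('a \<Rightarrow> real) set \<Rightarrow> bool" where
  "dense_L2 M S \<longleftrightarrow> S \<subseteq> L2 M \<and>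
     (\<forall>f\<in>L2 M. \<forall>e>0. \<exists>g\<in>S. sqrt (\<integral>x. (f x - g x)^2 \<partial>M) < e)"

end

theory Submission imports Defs begin

lemma taylor1:
  fixes \<sigma> :: "real \<Rightarrow> real"
  assumes diff: "\<And>x. \<sigma> differentiable (at x)" and lip: "L-lipschitz_on UNIV (deriv \<sigma>)"
    and s0: "\<sigma> 0 = 0"
  shows "\<bar>\<sigma> y - deriv \<sigma> 0 * y\<bar> \<le> L * y^2"
proof -
  have der: "\<And>x. DERIV \<sigma> x :> deriv \<sigma> x" using diff DERIV_deriv_iff_real_differentiable by blast
  have Ld: "\<And>a b. \<bar>deriv \<sigma> a - deriv \<sigma> b\<bar> \<le> L * \<bar>a - b\<bar>"
    using lipschitz_onD[OF lip] by (simp add: dist_real_def)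
  consider "y = 0" | "y > 0" | "y < 0" by linarith
  then show ?thesis
  proof cases
    case 1 then show ?thesis using s0 by simp
  next
    case 2
    obtain z where z: "0 < z" "z < y" "\<sigma> y - \<sigma> 0 = (y - 0) * deriv \<sigma> z"
      using MVT2[OF 2 der] by blast
    have "\<bar>\<sigma> y - deriv \<sigma> 0 * y\<bar> = y * \<bar>deriv \<sigma> z - deriv \<sigma> 0\<bar>"
    proof -
      have "\<sigma> y - deriv \<sigma> 0 * y = y * (deriv \<sigma> z - deriv \<sigma> 0)" using z s0 by (simp add: algebra_simps)
      then show ?thesis using 2 by (simp add: abs_mult)
    qed
    also have "\<dots> \<le> y * (L * \<bar>z - 0\<bar>)" using Ld[of z 0] 2 by (simp add: mult_left_mono)
    also have "\<dots> \<le> y * (L * y)" using z 2 lipschitz_on_nonneg[OF lip]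
      by (intro mult_left_mono) (auto intro: mult_left_mono)
    finally show ?thesis by (simp add: power2_eq_square algebra_simps)
  next
    case 3
    obtain z where z: "y < z" "z < 0" "\<sigma> 0 - \<sigma> y = (0 - y) * deriv \<sigma> z"
      using MVT2[OF 3 der] by blast
    have "\<bar>\<sigma> y - deriv \<sigma> 0 * y\<bar> = (-y) * \<bar>deriv \<sigma> z - deriv \<sigma> 0\<bar>"
    proof -
      have "\<sigma> y - deriv \<sigma> 0 * y = y * (deriv \<sigma> z - deriv \<sigma> 0)" using z s0 by (simp add: algebra_simps)
      then show ?thesis using 3 by (simp add: abs_mult)
    qed
    also have "\<dots> \<le> (-y) * (L * \<bar>z - 0\<bar>)" using Ld[of z 0] 3 by (simp add: mult_left_mono)
    also have "\<dots> \<le> (-y) * (L * (-y))" using z 3 lipschitz_on_nonneg[OF lip]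
      by (intro mult_left_mono) (auto intro: mult_left_mono)
    finally show ?thesis by (simp add: power2_eq_square algebra_simps)
  qed
qed

lemma approx1:
  fixes \<sigma> :: "real \<Rightarrow> real" and \<phi> :: "'a \<Rightarrow> real"
  assumes taylor: "\<And>y. \<bar>\<sigma> y - D * y\<bar> \<le> L * y^2" and L: "L \<ge> 0" and D: "D \<noteq> 0"
    and C: "AE x in M. \<bar>\<phi> x\<bar> \<le> C"
    and star: "\<forall>l\<in>{0..1::real}. \<exists>\<psi>\<in>\<Phi>. AE x in M. \<psi> x = l * \<phi> x"
    and e: "\<epsilon> > 0"
  shows "\<exists>\<psi>\<in>\<Phi>. \<exists>a. AE x in M. \<bar>\<phi> x - a * \<sigma> (\<psi> x)\<bar> \<le> \<epsilon>"
proof -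
  define t where "t = min 1 (\<epsilon>*\<bar>D\<bar> / ((L+1)*(C^2+1)))"
  have Dp: "\<bar>D\<bar> > 0" using D by simp
  have den: "(L+1)*(C^2+1) > 0" using L by (intro mult_pos_pos) (auto simp: add_pos_nonneg add_nonneg_pos)
  have tp: "t > 0" unfolding t_def using e Dp den by simp
  have t1: "t \<le> 1" unfolding t_def by simp
  have tle: "t * ((L+1)*(C^2+1)) \<le> \<epsilon>*\<bar>D\<bar>"
  proof -
    have "t \<le> \<epsilon>*\<bar>D\<bar> / ((L+1)*(C^2+1))" unfolding t_def by simp
    then show ?thesis using den by (simp add: le_divide_eq)
  qed
  obtain \<psi> where \<psi>: "\<psi> \<in> \<Phi>" "AE x in M. \<psi> x = t * \<phi> x"
    using star[rule_format, of t] tp t1 by auto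
  have "AE x in M. \<bar>\<phi> x - (1/(t*D)) * \<sigma> (\<psi> x)\<bar> \<le> \<epsilon>"
    using \<psi>(2) C
  proof eventually_elim
    case (elim x)
    have eq: "\<phi> x - (1/(t*D)) * \<sigma> (\<psi> x) = (D*(t*\<phi> x) - \<sigma>(t*\<phi> x)) / (t*D)"
      using elim tp D by (simp add: field_simps)
    have "\<bar>D*(t*\<phi> x) - \<sigma>(t*\<phi> x)\<bar> \<le> L * (t*\<phi> x)^2" using taylor[of "t*\<phi> x"] by (simp add: abs_minus_commute)
    also have "\<dots> = t * (t * (L * (\<phi> x)^2))" by (simp add: power2_eq_square)
    also have "\<dots> \<le> t * (t * ((L+1)*(C^2+1)))"
    proof -
      have "(\<phi> x)^2 \<le> C^2" using abs_le_square_iff[of "\<phi> x" C] elim abs_ge_self[of C] by linarith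
      then have a: "L * (\<phi> x)^2 \<le> L * C^2" using L by (rule mult_left_mono)
      have b: "L * C^2 \<le> (L+1)*(C^2+1)" using L by (intro mult_mono) auto
      from a b have "L * (\<phi> x)^2 \<le> (L+1)*(C^2+1)" by (rule order_trans)
      then show ?thesis using tp by (simp add: mult_left_mono)
    qed
    also have "\<dots> \<le> t * (\<epsilon>*\<bar>D\<bar>)" using tle tp by (simp add: mult_left_mono)
    finally have "\<bar>D*(t*\<phi> x) - \<sigma>(t*\<phi> x)\<bar> \<le> (t*\<bar>D\<bar>) * \<epsilon>" by (simp add: algebra_simps)
    then have "\<bar>D*(t*\<phi> x) - \<sigma>(t*\<phi> x)\<bar> / (t*\<bar>D\<bar>) \<le> \<epsilon>"
      using tp Dp by (simp add: divide_le_eq mult.commute)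
    then show ?case unfolding eq using tp by (simp add: abs_mult)
  qed
  then show ?thesis using \<psi>(1) by blast
qed

lemma span_add:
  assumes "h \<in> lin_span S" "s \<in> S"
  shows "(\<lambda>x. h x + c * s x) \<in> lin_span S"
proof -
  obtain n :: nat and c' g where ng: "\<forall>i<n. g i \<in> S" "h = (\<lambda>x. \<Sum>i<n. c' i * g i x)"
    using assms(1) unfolding lin_span_def by blast
  have "\<forall>i<Suc n. (g(n:=s)) i \<in> S" using ng(1) assms(2) by auto
  moreover have "(\<lambda>x. h x + c * s x) = (\<lambda>x. \<Sum>i<Suc n. (c'(n:=c)) i * (g(n:=s)) i x)"
    using ng(2) by (auto intro!: sum.cong)
  ultimately show ?thesis unfolding lin_span_def by blast
qed

lemma approx_span:
  fixes S :: "('a \<Rightarrow> real) set" and n :: nat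
  assumes single: "\<And>\<phi> \<epsilon>. \<phi>\<in>\<Phi> \<Longrightarrow> \<epsilon>>0 \<Longrightarrow> \<exists>s\<in>S. \<exists>a. AE x in M. \<bar>\<phi> x - a * s x\<bar> \<le> \<epsilon>"
  shows "(\<forall>i<n. g i \<in> \<Phi>) \<Longrightarrow> \<epsilon>>0 \<Longrightarrow> \<exists>h\<in>lin_span S. AE x in M. \<bar>(\<Sum>i<n. c i * g i x) - h x\<bar> \<le> \<epsilon>"
proof (induction n arbitrary: \<epsilon>)
  case 0
  have "(\<lambda>x. 0) \<in> lin_span S" unfolding lin_span_def by (rule CollectI, rule exI[of _ 0]) auto
  then show ?case using 0 by force
next
  case (Suc n)
  obtain h where h: "h \<in> lin_span S" "AE x in M. \<bar>(\<Sum>i<n. c i * g i x) - h x\<bar> \<le> \<epsilon>/2"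
    using Suc.IH[of "\<epsilon>/2"] Suc.prems by auto
  have pos: "\<epsilon> / (2*(\<bar>c n\<bar>+1)) > 0" using Suc.prems by (simp add: add_nonneg_pos)
  obtain s a where sa: "s \<in> S" "AE x in M. \<bar>g n x - a * s x\<bar> \<le> \<epsilon> / (2*(\<bar>c n\<bar>+1))"
    using single[OF _ pos] Suc.prems by blast
  have "(\<lambda>x. h x + (c n * a) * s x) \<in> lin_span S" by (rule span_add[OF h(1) sa(1)])
  moreover have "AE x in M. \<bar>(\<Sum>i<Suc n. c i * g i x) - (h x + (c n * a) * s x)\<bar> \<le> \<epsilon>"
    using h(2) sa(2)
  proof eventually_elim
    case (elim x)
    have "\<bar>(\<Sum>i<Suc n. c i * g i x) - (h x + (c n * a) * s x)\<bar>
       = \<bar>((\<Sum>i<n. c i * g i x) - h x) + c n * (g n x - a * s x)\<bar>" by (simp add: algebra_simps)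
    also have "\<dots> \<le> \<bar>(\<Sum>i<n. c i * g i x) - h x\<bar> + \<bar>c n * (g n x - a * s x)\<bar>"
      by (rule abs_triangle_ineq)
    also have "\<dots> = \<bar>(\<Sum>i<n. c i * g i x) - h x\<bar> + \<bar>c n\<bar> * \<bar>g n x - a * s x\<bar>"
      by (simp add: abs_mult)
    also have "\<dots> \<le> \<epsilon>/2 + \<bar>c n\<bar> * (\<epsilon> / (2*(\<bar>c n\<bar>+1)))"
      using elim by (intro add_mono mult_left_mono) auto
    also have "\<dots> \<le> \<epsilon>/2 + \<epsilon>/2"
    proof -
      have "\<bar>c n\<bar> * (\<epsilon> / (2*(\<bar>c n\<bar>+1))) = (\<epsilon>/2) * (\<bar>c n\<bar> / (\<bar>c n\<bar>+1))" by (simp add: field_simps)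
      also have "\<dots> \<le> (\<epsilon>/2) * 1" using Suc.prems by (intro mult_left_mono) auto
      finally have "\<bar>c n\<bar> * (\<epsilon> / (2*(\<bar>c n\<bar>+1))) \<le> \<epsilon>/2" by simp
      then show ?thesis by linarith
    qed
    finally show ?case by simp
  qed
  ultimately show ?case by (intro bexI[of _ "\<lambda>x. h x + (c n * a) * s x"]) auto
qed

lemma span_bdd:
  assumes "\<forall>s\<in>S. s \<in> borel_measurable M \<and> (\<forall>x. \<bar>s x\<bar> \<le> B)" "h \<in> lin_span S"
  shows "h \<in> borel_measurable M \<and> (\<exists>K. \<forall>x. \<bar>h x\<bar> \<le> K)"
proof -
  obtain n :: nat and c g where ng: "\<forall>i<n. g i \<in> S" "h = (\<lambda>x. \<Sum>i<n. c i * g i x)"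
    using assms(2) unfolding lin_span_def by blast
  have "h \<in> borel_measurable M" unfolding ng(2) using ng(1) assms(1) by (intro borel_measurable_sum borel_measurable_times) auto
  moreover have "\<forall>x. \<bar>h x\<bar> \<le> (\<Sum>i<n. \<bar>c i\<bar> * B)"
  proof
    fix x
    have "\<bar>h x\<bar> \<le> (\<Sum>i<n. \<bar>c i * g i x\<bar>)" unfolding ng(2) by (rule sum_abs)
    also have "\<dots> \<le> (\<Sum>i<n. \<bar>c i\<bar> * B)" using ng(1) assms(1)
      by (intro sum_mono) (auto simp: abs_mult intro: mult_left_mono)
    finally show "\<bar>h x\<bar> \<le> (\<Sum>i<n. \<bar>c i\<bar> * B)" .
  qed
  ultimately show ?thesis by blast
qed

lemma bdd_L2:
  assumes "finite_measure M" "h \<in> borel_measurable M" "\<forall>x. \<bar>h x\<bar> \<le> K"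
  shows "h \<in> L2 M"
proof -
  have int: "integrable M (\<lambda>x. K^2)" using assms(1) by (rule finite_measure.integrable_const)
  have ae: "AE x in M. norm ((h x)^2) \<le> norm (K^2)"
  proof (rule AE_I2)
    fix x
    have "(h x)^2 \<le> K^2" using abs_le_square_iff[of "h x" K] assms(3)[rule_format, of x] by linarith
    then show "norm ((h x)^2) \<le> norm (K^2)" by simp
  qed
  have meas: "(\<lambda>x. (h x)^2) \<in> borel_measurable M" using assms(2) by measurable
  have "integrable M (\<lambda>x. (h x)^2)" by (rule Bochner_Integration.integrable_bound[OF int meas ae])
  then show ?thesis using assms(2) unfolding L2_def by blast
qed

lemma diff_sq_int:
  assumes "f \<in> L2 M" "g \<in> L2 M"
  shows "integrable M (\<lambda>x. (f x - g x)^2)"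
proof -
  have m: "f \<in> borel_measurable M" "g \<in> borel_measurable M"
    and i: "integrable M (\<lambda>x. (f x)^2)" "integrable M (\<lambda>x. (g x)^2)" using assms unfolding L2_def by auto
  have int: "integrable M (\<lambda>x. 2*(f x)^2 + 2*(g x)^2)" by (intro Bochner_Integration.integrable_add Bochner_Integration.integrable_mult_right; rule i)
  have ae: "AE x in M. norm ((f x - g x)^2) \<le> norm (2*(f x)^2 + 2*(g x)^2)"
  proof (rule AE_I2)
    fix x
    have "(f x - g x)^2 \<le> 2*(f x)^2 + 2*(g x)^2"
    proof -
      have "2*(f x)^2 + 2*(g x)^2 - (f x - g x)^2 = (f x + g x)^2" by (simp add: power2_eq_square algebra_simps)
      moreover have "(f x + g x)^2 \<ge> 0" by simp
      ultimately show ?thesis by linarith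
    qed
    moreover have "0 \<le> 2*(f x)^2 + 2*(g x)^2" by simp
    ultimately show "norm ((f x - g x)^2) \<le> norm (2*(f x)^2 + 2*(g x)^2)" by (simp only: real_norm_def abs_of_nonneg zero_le_power2)
  qed
  have meas: "(\<lambda>x. (f x - g x)^2) \<in> borel_measurable M" using m by measurable
  show ?thesis by (rule Bochner_Integration.integrable_bound[OF int meas ae])
qed

theorem mainTheorem5:
  fixes M :: "'a::euclidean_space measure"
    and \<sigma> :: "real \<Rightarrow> real"
    and \<Phi> :: "('a \<Rightarrow> real) set"
  assumes "prob_space M"
    and "sets M = sets (restrict_space borel (space M))"
    and "bounded (range \<sigma>)"
    and "\<And>x. \<sigma> differentiable (at x)"
    and "\<sigma> 0 = 0"
    and "deriv \<sigma> 0 \<noteq> 0"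
    and "bounded (range (deriv \<sigma>))"
    and "\<exists>L. L-lipschitz_on UNIV (deriv \<sigma>)"
    and "\<Phi> \<subseteq> L2 M \<inter> Linf M"
    and "\<forall>\<phi>\<in>\<Phi>. \<forall>l\<in>{0..1::real}. \<exists>\<psi>\<in>\<Phi>. AE x in M. \<psi> x = l * \<phi> x"
    and "dense_L2 M (lin_span \<Phi>)"
  shows "dense_L2 M (lin_span ((\<lambda>\<phi>. \<sigma> \<circ> \<phi>) ` \<Phi>))"
proof -
  interpret P: prob_space M by fact
  have fm: "finite_measure M" by (rule P.finite_measure_axioms)
  obtain L where lip: "L-lipschitz_on UNIV (deriv \<sigma>)" using assms(8) by blast
  have L0: "L \<ge> 0" using lipschitz_on_nonneg[OF lip] .
  have tay: "\<And>y. \<bar>\<sigma> y - deriv \<sigma> 0 * y\<bar> \<le> L * y^2" using taylor1[OF assms(4) lip assms(5)] .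
  obtain B where B: "\<forall>y. \<bar>\<sigma> y\<bar> \<le> B" using assms(3) unfolding bounded_iff by auto
  have cont: "continuous_on UNIV \<sigma>"
    using assms(4) differentiable_imp_continuous_within continuous_at_imp_continuous_on by blast
  have sm: "\<sigma> \<in> borel_measurable borel" by (rule borel_measurable_continuous_onI[OF cont])
  define S' where "S' = (\<lambda>\<phi>. \<sigma> \<circ> \<phi>) ` \<Phi>"
  have Phim: "\<And>\<phi>. \<phi> \<in> \<Phi> \<Longrightarrow> \<phi> \<in> borel_measurable M" using assms(9) unfolding L2_def by auto
  have Sm: "\<forall>s\<in>S'. s \<in> borel_measurable M \<and> (\<forall>x. \<bar>s x\<bar> \<le> B)"
  proof
    fix s assume "s \<in> S'"
    then obtain \<phi> where ph: "\<phi> \<in> \<Phi>" "s = \<sigma> \<circ> \<phi>" unfolding S'_def by blast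
    have "s \<in> borel_measurable M" unfolding ph(2) by (rule measurable_comp[OF Phim[OF ph(1)] sm])
    moreover have "\<forall>x. \<bar>s x\<bar> \<le> B" unfolding ph(2) using B by simp
    ultimately show "s \<in> borel_measurable M \<and> (\<forall>x. \<bar>s x\<bar> \<le> B)" by blast
  qed
  have sub: "lin_span S' \<subseteq> L2 M"
  proof
    fix h assume "h \<in> lin_span S'"
    then obtain K where "h \<in> borel_measurable M" "\<forall>x. \<bar>h x\<bar> \<le> K" using span_bdd[OF Sm] by blast
    then show "h \<in> L2 M" using bdd_L2[OF fm] by blast
  qed
  have single: "\<exists>s\<in>S'. \<exists>a. AE x in M. \<bar>\<phi> x - a * s x\<bar> \<le> \<epsilon>" if phi: "\<phi> \<in> \<Phi>" and eps: "\<epsilon> > 0" for \<phi> \<epsilon>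
  proof -
    have "\<phi> \<in> Linf M" using assms(9) phi by blast
    then obtain C where C: "AE x in M. \<bar>\<phi> x\<bar> \<le> C" unfolding Linf_def by blast
    have star: "\<forall>l\<in>{0..1::real}. \<exists>\<psi>\<in>\<Phi>. AE x in M. \<psi> x = l * \<phi> x" using assms(10) phi by (rule bspec)
    obtain \<psi> a where \<psi>: "\<psi> \<in> \<Phi>" "AE x in M. \<bar>\<phi> x - a * \<sigma> (\<psi> x)\<bar> \<le> \<epsilon>"
      using approx1[OF tay L0 assms(6) C star eps] by blast
    have "\<sigma> \<circ> \<psi> \<in> S'" unfolding S'_def using \<psi>(1) by blast
    moreover have "AE x in M. \<bar>\<phi> x - a * (\<sigma> \<circ> \<psi>) x\<bar> \<le> \<epsilon>" using \<psi>(2) by (simp only: o_apply)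
    ultimately show ?thesis by blast
  qed
  have dens: "\<exists>h\<in>lin_span S'. sqrt (\<integral>x. (f x - h x)^2 \<partial>M) < e" if f: "f \<in> L2 M" and e: "e > 0" for f e
  proof -
    obtain g where g: "g \<in> lin_span \<Phi>" "sqrt (\<integral>x. (f x - g x)^2 \<partial>M) < e/2"
      using assms(11) f e unfolding dense_L2_def by (meson half_gt_zero)
    have gL2: "g \<in> L2 M" using assms(11) g(1) unfolding dense_L2_def by blast
    obtain n :: nat and c gs where ng: "\<forall>i<n. gs i \<in> \<Phi>" "g = (\<lambda>x. \<Sum>i<n. c i * gs i x)"
      using g(1) unfolding lin_span_def by blast
    have e4: "e/4 > 0" using e by simp
    have ex: "\<exists>h\<in>lin_span S'. AE x in M. \<bar>(\<Sum>i<n. c i * gs i x) - h x\<bar> \<le> e/4"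
      by (rule approx_span[of \<Phi> S' M, OF single ng(1) e4])
    then obtain h where h1: "h \<in> lin_span S'" and h2: "AE x in M. \<bar>(\<Sum>i<n. c i * gs i x) - h x\<bar> \<le> e/4"
      by blast
    have gx: "\<And>x. g x = (\<Sum>i<n. c i * gs i x)" using ng(2) by simp
    have h: "h \<in> lin_span S'" "AE x in M. \<bar>g x - h x\<bar> \<le> e/4"
      using h1 h2 by (simp_all only: gx)
    have hL2: "h \<in> L2 M" using sub h(1) by blast
    have I1: "integrable M (\<lambda>x. (f x - g x)^2)" by (rule diff_sq_int[OF f gL2])
    have I2: "integrable M (\<lambda>x. (f x - h x)^2)" by (rule diff_sq_int[OF f hL2])
    have I3: "integrable M (\<lambda>x. 2*(f x - g x)^2 + 2*(e/4)^2)"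
      by (intro Bochner_Integration.integrable_add Bochner_Integration.integrable_mult_right P.integrable_const; (rule I1)?)
    have "(\<integral>x. (f x - h x)^2 \<partial>M) \<le> (\<integral>x. 2*(f x - g x)^2 + 2*(e/4)^2 \<partial>M)"
    proof (rule integral_mono_AE[OF I2 I3])
      show "AE x in M. (f x - h x)^2 \<le> 2*(f x - g x)^2 + 2*(e/4)^2"
        using h(2)
      proof eventually_elim
        case (elim x)
        have "2*(f x - g x)^2 + 2*(g x - h x)^2 - (f x - h x)^2 = ((f x - g x) - (g x - h x))^2"
          by (simp add: power2_eq_square algebra_simps)
        moreover have "((f x - g x) - (g x - h x))^2 \<ge> 0" by simp
        moreover have "(g x - h x)^2 \<le> (e/4)^2" using elim abs_le_square_iff[of "g x - h x" "e/4"] e by simp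
        ultimately show ?case by linarith
      qed
    qed
    also have "\<dots> = 2 * (\<integral>x. (f x - g x)^2 \<partial>M) + 2*(e/4)^2"
    proof -
      have I1': "integrable M (\<lambda>x. 2*(f x - g x)^2)"
        by (intro Bochner_Integration.integrable_mult_right; rule I1)
      have a: "(\<integral>x. 2*(f x - g x)^2 + 2*(e/4)^2 \<partial>M) = (\<integral>x. 2*(f x - g x)^2 \<partial>M) + (\<integral>x. 2*(e/4)^2 \<partial>M)"
        by (rule Bochner_Integration.integral_add[OF I1' P.integrable_const])
      have b: "(\<integral>x. 2*(f x - g x)^2 \<partial>M) = 2 * (\<integral>x. (f x - g x)^2 \<partial>M)"
        by (rule integral_mult_right_zero)
      have c: "(\<integral>x. 2*(e/4)^2 \<partial>M) = measure M (space M) *\<^sub>R (2*(e/4)^2)"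
        by (rule lebesgue_integral_const)
      have d: "measure M (space M) = 1" by (rule P.prob_space)
      show ?thesis by (simp only: a b c d scaleR_one)
    qed
    finally have le: "(\<integral>x. (f x - h x)^2 \<partial>M) \<le> 2 * (\<integral>x. (f x - g x)^2 \<partial>M) + 2*(e/4)^2" .
    have nn: "(\<integral>x. (f x - g x)^2 \<partial>M) \<ge> 0" by (rule integral_nonneg_AE) (rule AE_I2, rule zero_le_power2)
    have "(\<integral>x. (f x - g x)^2 \<partial>M) = (sqrt (\<integral>x. (f x - g x)^2 \<partial>M))^2" using nn by simp
    also have "\<dots> < (e/2)^2" using g(2) by (intro power_strict_mono) auto
    finally have lt: "(\<integral>x. (f x - g x)^2 \<partial>M) < (e/2)^2" .
    have "(\<integral>x. (f x - h x)^2 \<partial>M) < e^2" using le lt e mult_pos_pos[OF e e] by (simp add: power2_eq_square; linarith)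
    then have "sqrt (\<integral>x. (f x - h x)^2 \<partial>M) < sqrt (e^2)" by (rule real_sqrt_less_mono)
    then show ?thesis using h(1) e by auto
  qed
  show ?thesis unfolding dense_L2_def S'_def[symmetric] using sub dens by blast
qed

end
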